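(* Let $d\ge3$ be odd, $k\in\mathbb{Z}^+$, $\phi_{(d,k)}(x)=x^d+kdx^{d-1}-kd$, and $a=-k(d-1)$. Then $\phi_{(d,k)}^n(a)>0$ for all $n\ge1$.
   Context: $\phi^n$ denotes the $n$-fold iterate. *)

theory Defs
  imports Main
begin

definition phi :: "nat \<Rightarrow> int \<Rightarrow> int \<Rightarrow> int" where
  "phi d k x = x ^ d + k * int d * x ^ (d - 1) - k * int d"

end

theory Submission
  imports Defs
begin

lemma phi_ge: assumes "x \<ge> 1" "k \<ge> 1" "d \<ge> 1" shows "phi d k x \<ge> x"
proof -
  have p: "x ^ (d-1) \<ge> 1" using assms by simp
  have "x ^ d + k * int d * x ^ (d - 1) \<ge> x ^ (d-1) * (x + k * int d)"
  proof (cases d)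
    case 0 then show ?thesis using assms by simp
  next
    case (Suc m) then show ?thesis by (simp add: algebra_simps)
  qed
  moreover have "x ^ (d-1) * (x + k * int d) \<ge> 1 * (x + k * int d)"
    by (rule mult_right_mono[OF p]) (use assms in simp)
  ultimately show ?thesis unfolding phi_def by simp
qed

lemma phi_a: assumes "d \<ge> 3" "odd d" "k \<ge> 1"
  shows "phi d k (- k * (int d - 1)) \<ge> 1"
proof -
  obtain j where j: "d = Suc (2*j)" using assms(2) oddE by (metis Suc_eq_plus1)
  define m where "m = k * (int d - 1)"
  have m2: "m \<ge> int d - 1" unfolding m_def using assms by simp
  have dm1: "int d - 1 \<ge> 2" using assms by simp
  have jj: "j \<ge> 1" using j assms by simp
  have e1: "(-m) ^ (d-1) = m ^ (d-1)" using j by (simp add: power_mult)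
  have e2: "(-m) ^ d = - m * m ^ (d-1)" using j by simp
  have "m ^ (d-1) \<ge> (int d - 1) ^ (d-1)" using m2 dm1 by (intro power_mono) auto
  moreover have "(int d - 1) ^ (d-1) \<ge> (int d - 1) ^ 2"
    using dm1 j jj by (intro power_increasing) auto
  moreover have "(int d - 1) ^ 2 \<ge> int d + 1"
    using dm1 by (simp add: power2_eq_square algebra_simps)
  ultimately have big: "m ^ (d-1) \<ge> int d + 1" by linarith
  have "phi d k (-m) = k * m ^ (d-1) - k * int d"
    unfolding phi_def e1 e2 by (simp add: m_def algebra_simps del: minus_mult_left)
  also have "\<dots> = k * (m ^ (d-1) - int d)" by (simp add: algebra_simps)
  also have "\<dots> \<ge> 1 * 1" using big assms(3) by (intro mult_mono) auto
  finally have "phi d k (-m) \<ge> 1" by simp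
  moreover have "- k * (int d - 1) = -m" by (simp add: m_def)
  ultimately show ?thesis by simp
qed

theorem lemma3p3:
  fixes d :: nat and k :: int and n :: nat
  assumes "d \<ge> 3" and "odd d" and "k \<ge> 1" and "n \<ge> 1"
  shows "(phi d k ^^ n) (- k * (int d - 1)) > 0"
proof -
  have "(phi d k ^^ Suc m) (- k * (int d - 1)) \<ge> 1" for m
  proof (induction m)
    case 0 then show ?case using phi_a[OF assms(1-3)] by simp
  next
    case (Suc m) then show ?case using phi_ge[OF Suc, of k d] assms by simp
  qed
  from this[of "n-1"] assms(4) show ?thesis by simp
qed

end
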